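(* Consider the $\mathcal N$-system (setting in the context) with $\boldsymbol\lambda\to(\mu_1,\mu_2)$, operating under a scheduling policy that achieves state space collapse. Let $\Phi=\{\boldsymbol\phi\in\mathbb C^2:\mathrm{Re}(\phi_1)\le0,\mathrm{Re}(\phi_1+\phi_2)\le0\}$ and $\boldsymbol\phi\in\Phi$. Then, with expectations under the stationary distribution: 1. $\lim_{\epsilon\to0}|\mathbb E[e^{\epsilon(\phi_1q_1+\phi_2q_2)}]|<\infty$, $\lim_{\epsilon\to0}|\mathbb E[e^{\epsilon(\phi_1+\phi_2)q_2}\mid q_1\le q_2]|<\infty$ and $\lim_{\epsilon\to0}|\mathbb E[e^{\epsilon\phi_1q_1}\mid q_2=0]|<\infty$; 2. $\lim_{\epsilon\to0}\mathbb E[e^{\epsilon(\phi_1q_1+\phi_2q_2)}]=\lim_{\epsilon\to0}\mathbb E\big[e^{\epsilon(\phi_1(q_1-q_2)\mathbf 1_{\{q_1\ge q_2\}}+(\phi_1+\phi_2)q_2)}\big]$.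
   Context: $\mathcal N$-system: continuous time, queues $q_1,q_2$ with independent Poisson arrivals of rates $\lambda_1,\lambda_2$; server $S_1$ (exponential rate $\mu_1$) serves either class, one queue at a time; server $S_2$ (rate $\mu_2$) serves only class 2; configurations ($S_1\to q_1$, $S_2\to q_2$) or (both $\to q_2$). The policy makes $(q_1(t),q_2(t))$ an irreducible aperiodic positive recurrent Markov chain; $(q_1,q_2)$ is stationary. $\lambda_1=(1-\epsilon)\mu_1$, $\lambda_1+\lambda_2=(1-\gamma\epsilon)(\mu_1+\mu_2)$, fixed $\gamma>0$, $\epsilon\to0$. With $\mathcal K_3=\{\mathbf x\in\mathbb R^2_+:x_2\le x_1\}$ and $\mathbf q_{\perp\mathcal K_3}=\frac{q_2-q_1}{2}(-1,1)\mathbf 1_{\{q_2>q_1\}}$, state space collapse means: for every $\theta\ge0$ there are $\epsilon(\theta)>0$ and $C^\star<\infty$ with $\mathbb E[e^{\epsilon\theta\|\mathbf q_{\perp\mathcal K_3}\|}]<C^\star$ for $0<\epsilon\le\epsilon(\theta)$, and for each nonnegative integer $r$, $\mathbb E\|\mathbf q_{\perp\mathcal K_3}\|^r\le C_r$ independent of $\epsilon$. *)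

theory Defs
  imports "HOL-Probability.Probability"
begin

definition lam1 :: "real \<Rightarrow> real \<Rightarrow> real" where
  "lam1 mu1 eps = (1 - eps) * mu1"

definition lam2 :: "real \<Rightarrow> real \<Rightarrow> real \<Rightarrow> real \<Rightarrow> real" where
  "lam2 mu1 mu2 gam eps = (1 - gam * eps) * (mu1 + mu2) - (1 - eps) * mu1"

text \<open>The (possibly randomised) Markovian policy is given by p x \<in> [0,1], the probability
  that in state x the configuration (S1 to q1, S2 to q2) is used; with probability
  1 - p x both servers serve q2.\<close>
definition Nrate :: "real \<Rightarrow> real \<Rightarrow> real \<Rightarrow> real \<Rightarrow> (nat \<times> nat \<Rightarrow> real)
    \<Rightarrow> nat \<times> nat \<Rightarrow> nat \<times> nat \<Rightarrow> real" where
  "Nrate l1 l2 m1 m2 p x y = (case x of (a, b) \<Rightarrow>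
      (if y = (a + 1, b) then l1 else 0)
    + (if y = (a, b + 1) then l2 else 0)
    + (if 0 < a \<and> y = (a - 1, b) then p x * m1 else 0)
    + (if 0 < b \<and> y = (a, b - 1) then m2 + (1 - p x) * m1 else 0))"

definition stationary_dist :: "(nat \<times> nat \<Rightarrow> nat \<times> nat \<Rightarrow> real) \<Rightarrow> (nat \<times> nat) pmf \<Rightarrow> bool" where
  "stationary_dist R P \<longleftrightarrow>
     (\<forall>y. pmf P y * (\<Sum>\<^sub>\<infinity>z. R y z) = (\<Sum>\<^sub>\<infinity>x. pmf P x * R x y))"

definition irreducible_chain :: "(nat \<times> nat \<Rightarrow> nat \<times> nat \<Rightarrow> real) \<Rightarrow> bool" where
  "irreducible_chain R \<longleftrightarrow> (\<forall>x y. (\<lambda>u v. 0 < R u v)\<^sup>*\<^sup>* x y)"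

text \<open>Norm of the projection of q onto the polar cone of K3: ((q2-q1)/2)(-1,1) 1{q2>q1}.\<close>
definition qperp_norm :: "nat \<times> nat \<Rightarrow> real" where
  "qperp_norm q = max 0 (real (snd q) - real (fst q)) / sqrt 2"

end

theory Submission imports Defs begin

lemma exp_minus1_bound: "cmod (exp w - 1) \<le> cmod w * exp (cmod w)"
proof -
  have "cmod (exp w - exp 0) \<le> exp (cmod w) * cmod (w - 0)"
  proof (rule field_differentiable_bound[where S="cball 0 (cmod w)" and f'=exp])
    show "convex (cball (0::complex) (cmod w))" by simp
    fix z :: complex assume z: "z \<in> cball 0 (cmod w)"
    show "(exp has_field_derivative exp z) (at z within cball 0 (cmod w))"
      by (intro DERIV_exp has_field_derivative_at_within)
    have "Re z \<le> cmod z" by (rule complex_Re_le_cmod)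
    also have "\<dots> \<le> cmod w" using z by simp
    finally show "cmod (exp z) \<le> exp (cmod w)" by simp
  qed auto
  thus ?thesis by (simp add: mult.commute)
qed

lemma re_bound:
  fixes a b :: nat and phi1 phi2 :: complex
  assumes "Re phi1 \<le> 0" "Re (phi1 + phi2) \<le> 0"
  shows "Re phi1 * a + Re phi2 * b \<le> max 0 (Re phi2) * max 0 (real b - real a)"
proof (cases "a \<le> b")
  case True
  have "Re phi1 * a + Re phi2 * b = (Re phi1 + Re phi2) * a + Re phi2 * (real b - real a)"
    by (simp add: algebra_simps)
  also have "\<dots> \<le> 0 + max 0 (Re phi2) * (real b - real a)"
    apply (rule add_mono)
    using assms True by (auto intro!: mult_nonpos_nonneg mult_right_mono)
  finally show ?thesis using True by simp
next
  case False
  have "Re phi1 * a + Re phi2 * b = Re phi1 * (real a - real b) + (Re phi1 + Re phi2) * b"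
    by (simp add: algebra_simps)
  moreover have "Re phi1 * (real a - real b) \<le> 0" using assms False
    by (intro mult_nonpos_nonneg) auto
  moreover have "(Re phi1 + Re phi2) * real b \<le> 0" using assms
    by (intro mult_nonpos_nonneg) auto
  moreover have "0 \<le> max 0 (Re phi2) * max 0 (real b - real a)" by simp
  ultimately show ?thesis by linarith
qed

lemma f_bound:
  fixes phi1 phi2 :: complex and eps :: real and q :: "nat \<times> nat"
  assumes "Re phi1 \<le> 0" "Re (phi1 + phi2) \<le> 0" "0 \<le> eps"
  shows "cmod (exp (complex_of_real eps * (phi1 * of_nat (fst q) + phi2 * of_nat (snd q))))
     \<le> exp (eps * (sqrt 2 * max 0 (Re phi2)) * qperp_norm q)"
proof -
  have "Re (complex_of_real eps * (phi1 * of_nat (fst q) + phi2 * of_nat (snd q)))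
     = eps * (Re phi1 * fst q + Re phi2 * snd q)" by simp
  also have "\<dots> \<le> eps * (max 0 (Re phi2) * max 0 (real (snd q) - real (fst q)))"
    using re_bound[OF assms(1,2), of "fst q" "snd q"] assms(3) by (rule mult_left_mono)
  also have "\<dots> = eps * (sqrt 2 * max 0 (Re phi2)) * qperp_norm q"
    by (simp add: qperp_norm_def)
  finally show ?thesis by simp
qed

lemma cond_bound:
  fixes M :: "'a pmf" and S :: "'a set" and h :: "'a \<Rightarrow> complex"
  assumes "\<And>q. cmod (h q) \<le> indicator S q"
  shows "cmod (measure_pmf.expectation M h / complex_of_real (measure_pmf.prob M S)) \<le> 1"
proof -
  have int: "integrable (measure_pmf M) h"
  proof (rule Bochner_Integration.integrable_bound[where f="\<lambda>_. 1::real" and g=h])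
    show "AE x in measure_pmf M. norm (h x) \<le> norm (1::real)"
    proof (rule AE_I2)
      fix x have "cmod (h x) \<le> indicator S x" by (rule assms)
      also have "\<dots> \<le> 1" by (simp add: indicator_def)
      finally show "norm (h x) \<le> norm (1::real)" by simp
    qed
  qed auto
  have "cmod (measure_pmf.expectation M h) \<le> measure_pmf.expectation M (\<lambda>q. cmod (h q))"
    by (rule integral_norm_bound)
  also have "\<dots> \<le> measure_pmf.expectation M (indicator S)"
    by (rule integral_mono) (use int assms in \<open>auto intro!: integrable_real_indicator simp: measure_pmf.emeasure_finite less_top[symmetric]\<close>)
  also have "\<dots> = measure_pmf.prob M S" by simp
  finally have le: "cmod (measure_pmf.expectation M h) \<le> measure_pmf.prob M S" .
  show ?thesis
  proof (cases "measure_pmf.prob M S = 0")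
    case True thus ?thesis by simp
  next
    case False
    hence "0 < measure_pmf.prob M S" using measure_nonneg[of "measure_pmf M" S] by linarith
    thus ?thesis using le by (simp add: norm_divide)
  qed
qed

lemma diff_bound:
  fixes phi1 phi2 :: complex and eps :: real and q :: "nat \<times> nat"
  assumes A: "Re phi1 \<le> 0" and B: "Re (phi1 + phi2) \<le> 0" and E: "0 \<le> eps"
  shows "cmod (exp (complex_of_real eps * (phi1 * of_nat (fst q) + phi2 * of_nat (snd q)))
      - exp (complex_of_real eps * (phi1 * (if snd q \<le> fst q then of_nat (fst q) - of_nat (snd q) else 0)
                 + (phi1 + phi2) * of_nat (snd q))))
     \<le> eps * cmod phi1 * (qperp_norm q ^ 2 + exp (eps * (2 * sqrt 2 * cmod phi1) * qperp_norm q))"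
proof -
  obtain a b where q: "q = (a, b)" by force
  have rhs: "0 \<le> eps * cmod phi1 * (qperp_norm q ^ 2 + exp (eps * (2 * sqrt 2 * cmod phi1) * qperp_norm q))"
    using E by (intro mult_nonneg_nonneg add_nonneg_nonneg) auto
  show ?thesis
  proof (cases "b \<le> a")
    case True
    have "phi1 * (of_nat a - of_nat b) + (phi1 + phi2) * of_nat b = phi1 * of_nat a + phi2 * of_nat b"
      by (simp add: algebra_simps)
    thus ?thesis using True rhs q by simp
  next
    case False
    define d where "d = real b - real a"
    have d: "0 < d" using False d_def by simp
    define K where "K = cmod phi1"
    define u where "u = complex_of_real eps * (phi1 + phi2) * of_nat b"
    define w where "w = - (complex_of_real eps * phi1 * complex_of_real d)"
    have dd: "complex_of_real d = of_nat b - of_nat a" by (simp add: d_def)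
    have e1: "complex_of_real eps * (phi1 * of_nat a + phi2 * of_nat b) = u + w"
      unfolding u_def w_def dd by (simp add: algebra_simps)
    have e2: "complex_of_real eps * (phi1 * 0 + (phi1 + phi2) * of_nat b) = u"
      by (simp add: u_def)
    have "Re u = eps * ((Re phi1 + Re phi2) * b)" by (simp add: u_def)
    also have "\<dots> \<le> 0" using B E by (intro mult_nonneg_nonpos mult_nonpos_nonneg) auto
    finally have u1: "cmod (exp u) \<le> 1" by simp
    have cw: "cmod w = eps * K * d" using E d by (simp add: w_def K_def norm_mult)
    have "cmod (exp (u + w) - exp u) = cmod (exp u) * cmod (exp w - 1)"
    proof -
      have "exp (u + w) - exp u = exp u * (exp w - 1)" by (simp add: exp_add algebra_simps)
      thus ?thesis by (simp only: norm_mult)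
    qed
    also have "\<dots> \<le> 1 * (cmod w * exp (cmod w))"
      by (intro mult_mono u1 exp_minus1_bound) auto
    also have "\<dots> = eps * K * (d * exp (eps * K * d))" by (simp add: cw)
    also have "\<dots> \<le> eps * K * (d^2 / 2 + exp (2 * (eps * K * d)) / 2)"
    proof (intro mult_left_mono)
      have "2 * (d * exp (eps * K * d)) \<le> d^2 + (exp (eps * K * d))^2"
        using sum_squares_bound[of d "exp (eps * K * d)"] by simp
      also have "(exp (eps * K * d))^2 = exp (2 * (eps * K * d))"
        by (simp add: power2_eq_square exp_add[symmetric])
      finally show "d * exp (eps * K * d) \<le> d^2 / 2 + exp (2 * (eps * K * d)) / 2" by simp
    qed (use E K_def in auto)
    also have "\<dots> \<le> eps * K * (qperp_norm q ^ 2 + exp (eps * (2 * sqrt 2 * K) * qperp_norm q))"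
    proof (intro mult_left_mono)
      have qp: "qperp_norm q = d / sqrt 2" using d by (simp add: qperp_norm_def q d_def)
      have h1: "qperp_norm q ^ 2 = d^2 / 2" by (simp add: qp power_divide)
      have h2: "eps * (2 * sqrt 2 * K) * qperp_norm q = 2 * (eps * K * d)" by (simp add: qp)
      have h3: "0 \<le> exp (2 * (eps * K * d))" by simp
      show "d^2 / 2 + exp (2 * (eps * K * d)) / 2
          \<le> qperp_norm q ^ 2 + exp (eps * (2 * sqrt 2 * K) * qperp_norm q)"
        unfolding h1 h2 using h3 by linarith
    qed (use E K_def in auto)
    finally show ?thesis using False e1 e2 by (simp add: q K_def)
  qed
qed

theorem lemma8:
  fixes mu1 mu2 gam eps0 :: real
    and p :: "real \<Rightarrow> nat \<times> nat \<Rightarrow> real"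
    and pst :: "real \<Rightarrow> (nat \<times> nat) pmf"
    and phi1 phi2 :: complex
  assumes mu1: "0 < mu1" and mu2: "0 < mu2" and gam: "0 < gam" and eps0: "0 < eps0"
    and lam2_pos: "\<forall>eps\<in>{0<..<eps0}. 0 < lam2 mu1 mu2 gam eps"
    and policy: "\<forall>eps\<in>{0<..<eps0}. \<forall>x. 0 \<le> p eps x \<and> p eps x \<le> 1"
    and irred: "\<forall>eps\<in>{0<..<eps0}.
        irreducible_chain (Nrate (lam1 mu1 eps) (lam2 mu1 mu2 gam eps) mu1 mu2 (p eps))"
    and stat: "\<forall>eps\<in>{0<..<eps0}.
        stationary_dist (Nrate (lam1 mu1 eps) (lam2 mu1 mu2 gam eps) mu1 mu2 (p eps)) (pst eps)"
    and ssc_exp: "\<forall>theta\<ge>0. \<exists>eps_th>0. \<exists>C. \<forall>eps. 0 < eps \<and> eps \<le> eps_th \<and> eps < eps0 \<longrightarrow>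
        integrable (measure_pmf (pst eps)) (\<lambda>q. exp (eps * theta * qperp_norm q)) \<and>
        measure_pmf.expectation (pst eps) (\<lambda>q. exp (eps * theta * qperp_norm q)) < C"
    and ssc_mom: "\<forall>r::nat. \<exists>C. \<forall>eps\<in>{0<..<eps0}.
        integrable (measure_pmf (pst eps)) (\<lambda>q. qperp_norm q ^ r) \<and>
        measure_pmf.expectation (pst eps) (\<lambda>q. qperp_norm q ^ r) \<le> C"
    and phi1: "Re phi1 \<le> 0" and phi12: "Re (phi1 + phi2) \<le> 0"
  shows
    "(\<exists>C. \<forall>\<^sub>F eps in at_right 0.
        cmod (measure_pmf.expectation (pst eps)
          (\<lambda>q. exp (complex_of_real eps * (phi1 * of_nat (fst q) + phi2 * of_nat (snd q))))) \<le> C)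
   \<and> (\<exists>C. \<forall>\<^sub>F eps in at_right 0.
        cmod (measure_pmf.expectation (pst eps)
          (\<lambda>q. if fst q \<le> snd q then exp (complex_of_real eps * (phi1 + phi2) * of_nat (snd q)) else 0)
          / complex_of_real (measure_pmf.prob (pst eps) {q. fst q \<le> snd q})) \<le> C)
   \<and> (\<exists>C. \<forall>\<^sub>F eps in at_right 0.
        cmod (measure_pmf.expectation (pst eps)
          (\<lambda>q. if snd q = 0 then exp (complex_of_real eps * phi1 * of_nat (fst q)) else 0)
          / complex_of_real (measure_pmf.prob (pst eps) {q. snd q = 0})) \<le> C)
   \<and> ((\<lambda>eps. measure_pmf.expectation (pst eps)
          (\<lambda>q. exp (complex_of_real eps * (phi1 * of_nat (fst q) + phi2 * of_nat (snd q))))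
        - measure_pmf.expectation (pst eps)
          (\<lambda>q. exp (complex_of_real eps * (phi1 * (if snd q \<le> fst q then of_nat (fst q) - of_nat (snd q) else 0)
                 + (phi1 + phi2) * of_nat (snd q)))))
       \<longlongrightarrow> 0) (at_right 0)"
proof -
  define F where "F = (\<lambda>eps q. exp (complex_of_real eps * (phi1 * of_nat (fst q) + phi2 * of_nat (snd q))))"
  define G where "G = (\<lambda>eps q. exp (complex_of_real eps * (phi1 * (if snd q \<le> fst q then of_nat (fst q) - of_nat (snd q) else 0)
                 + (phi1 + phi2) * of_nat (snd q))))"
  define th1 where "th1 = sqrt 2 * max 0 (Re phi2)"
  define th2 where "th2 = 2 * sqrt 2 * cmod phi1"
  obtain e1 C1 where e1: "e1 > 0" and C1: "\<And>eps. 0 < eps \<Longrightarrow> eps \<le> e1 \<Longrightarrow> eps < eps0 \<Longrightarrow>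
        integrable (measure_pmf (pst eps)) (\<lambda>q. exp (eps * th1 * qperp_norm q)) \<and>
        measure_pmf.expectation (pst eps) (\<lambda>q. exp (eps * th1 * qperp_norm q)) < C1"
    using ssc_exp[rule_format, of th1] unfolding th1_def by force
  obtain e2 C2 where e2: "e2 > 0" and C2: "\<And>eps. 0 < eps \<Longrightarrow> eps \<le> e2 \<Longrightarrow> eps < eps0 \<Longrightarrow>
        integrable (measure_pmf (pst eps)) (\<lambda>q. exp (eps * th2 * qperp_norm q)) \<and>
        measure_pmf.expectation (pst eps) (\<lambda>q. exp (eps * th2 * qperp_norm q)) < C2"
    using ssc_exp[rule_format, of th2] unfolding th2_def by force
  obtain C3 where C3: "\<And>eps. eps \<in> {0<..<eps0} \<Longrightarrow>
        integrable (measure_pmf (pst eps)) (\<lambda>q. qperp_norm q ^ 2) \<and>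
        measure_pmf.expectation (pst eps) (\<lambda>q. qperp_norm q ^ 2) \<le> C3"
    using ssc_mom[rule_format, of 2] by blast
  have Fb: "cmod (F eps q) \<le> exp (eps * th1 * qperp_norm q)" if "0 \<le> eps" for eps q
    unfolding F_def th1_def by (rule f_bound[OF phi1 phi12 that])
  have Fint: "integrable (measure_pmf (pst eps)) (F eps)"
    and FE: "cmod (measure_pmf.expectation (pst eps) (F eps)) < C1"
    if "0 < eps" "eps < min e1 eps0" for eps
  proof -
    have i1: "integrable (measure_pmf (pst eps)) (\<lambda>q. exp (eps * th1 * qperp_norm q))"
      and c1: "measure_pmf.expectation (pst eps) (\<lambda>q. exp (eps * th1 * qperp_norm q)) < C1"
      using C1[of eps] that by auto
    show i2: "integrable (measure_pmf (pst eps)) (F eps)"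
      by (rule Bochner_Integration.integrable_bound[OF i1]) (use Fb that in auto)
    have "cmod (measure_pmf.expectation (pst eps) (F eps)) \<le> measure_pmf.expectation (pst eps) (\<lambda>q. cmod (F eps q))"
      by (rule integral_norm_bound)
    also have "\<dots> \<le> measure_pmf.expectation (pst eps) (\<lambda>q. exp (eps * th1 * qperp_norm q))"
      by (rule integral_mono) (use i1 i2 Fb that in auto)
    finally show "cmod (measure_pmf.expectation (pst eps) (F eps)) < C1" using c1 by linarith
  qed
  have P1: "\<exists>C. \<forall>\<^sub>F eps in at_right 0. cmod (measure_pmf.expectation (pst eps) (F eps)) \<le> C"
  proof (intro exI)
    show "\<forall>\<^sub>F eps in at_right 0. cmod (measure_pmf.expectation (pst eps) (F eps)) \<le> C1"
      unfolding eventually_at_right_field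
      by (rule exI[of _ "min e1 eps0"]) (use e1 eps0 FE in \<open>auto intro: less_imp_le\<close>)
  qed
  have P2: "\<exists>C. \<forall>\<^sub>F eps in at_right 0.
        cmod (measure_pmf.expectation (pst eps)
          (\<lambda>q. if fst q \<le> snd q then exp (complex_of_real eps * (phi1 + phi2) * of_nat (snd q)) else 0)
          / complex_of_real (measure_pmf.prob (pst eps) {q. fst q \<le> snd q})) \<le> C"
  proof (intro exI)
    show "\<forall>\<^sub>F eps in at_right 0.
        cmod (measure_pmf.expectation (pst eps)
          (\<lambda>q. if fst q \<le> snd q then exp (complex_of_real eps * (phi1 + phi2) * of_nat (snd q)) else 0)
          / complex_of_real (measure_pmf.prob (pst eps) {q. fst q \<le> snd q})) \<le> 1"
      unfolding eventually_at_right_field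
    proof (intro exI[of _ 1] conjI allI impI)
      fix eps :: real assume "0 < eps"
      show "cmod (measure_pmf.expectation (pst eps)
          (\<lambda>q. if fst q \<le> snd q then exp (complex_of_real eps * (phi1 + phi2) * of_nat (snd q)) else 0)
          / complex_of_real (measure_pmf.prob (pst eps) {q. fst q \<le> snd q})) \<le> 1"
      proof (rule cond_bound)
        fix q :: "nat \<times> nat"
        have "eps * (Re (phi1 + phi2) * real (snd q)) \<le> 0"
          using \<open>0 < eps\<close> phi12 by (intro mult_nonneg_nonpos mult_nonpos_nonneg) auto
        thus "cmod (if fst q \<le> snd q then exp (complex_of_real eps * (phi1 + phi2) * of_nat (snd q)) else 0)
            \<le> indicator {q. fst q \<le> snd q} q"
          by (auto simp: indicator_def)
      qed
    qed simp
  qed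
  have P3: "\<exists>C. \<forall>\<^sub>F eps in at_right 0.
        cmod (measure_pmf.expectation (pst eps)
          (\<lambda>q. if snd q = 0 then exp (complex_of_real eps * phi1 * of_nat (fst q)) else 0)
          / complex_of_real (measure_pmf.prob (pst eps) {q. snd q = 0})) \<le> C"
  proof (intro exI)
    show "\<forall>\<^sub>F eps in at_right 0.
        cmod (measure_pmf.expectation (pst eps)
          (\<lambda>q. if snd q = 0 then exp (complex_of_real eps * phi1 * of_nat (fst q)) else 0)
          / complex_of_real (measure_pmf.prob (pst eps) {q. snd q = 0})) \<le> 1"
      unfolding eventually_at_right_field
    proof (intro exI[of _ 1] conjI allI impI)
      fix eps :: real assume "0 < eps"
      show "cmod (measure_pmf.expectation (pst eps)
          (\<lambda>q. if snd q = 0 then exp (complex_of_real eps * phi1 * of_nat (fst q)) else 0)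
          / complex_of_real (measure_pmf.prob (pst eps) {q. snd q = 0})) \<le> 1"
      proof (rule cond_bound)
        fix q :: "nat \<times> nat"
        have "eps * (Re phi1 * real (fst q)) \<le> 0"
          using \<open>0 < eps\<close> phi1 by (intro mult_nonneg_nonpos mult_nonpos_nonneg) auto
        thus "cmod (if snd q = 0 then exp (complex_of_real eps * phi1 * of_nat (fst q)) else 0)
            \<le> indicator {q. snd q = 0} q"
          by (auto simp: indicator_def)
      qed
    qed simp
  qed
  define B where "B = (\<lambda>eps q. eps * cmod phi1 * (qperp_norm q ^ 2 + exp (eps * th2 * qperp_norm q)))"
  have Db: "cmod (F eps q - G eps q) \<le> B eps q" if "0 \<le> eps" for eps q
    unfolding F_def G_def B_def th2_def by (rule diff_bound[OF phi1 phi12 that])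
  have DE: "cmod (measure_pmf.expectation (pst eps) (F eps) - measure_pmf.expectation (pst eps) (G eps))
      \<le> eps * cmod phi1 * (C3 + C2)"
    if "0 < eps" "eps < min e1 (min e2 eps0)" for eps
  proof -
    have i3: "integrable (measure_pmf (pst eps)) (\<lambda>q. qperp_norm q ^ 2)"
      and c3: "measure_pmf.expectation (pst eps) (\<lambda>q. qperp_norm q ^ 2) \<le> C3"
      using C3[of eps] that by auto
    have i2: "integrable (measure_pmf (pst eps)) (\<lambda>q. exp (eps * th2 * qperp_norm q))"
      and c2: "measure_pmf.expectation (pst eps) (\<lambda>q. exp (eps * th2 * qperp_norm q)) < C2"
      using C2[of eps] that by auto
    have iB: "integrable (measure_pmf (pst eps)) (B eps)"
      unfolding B_def using i2 i3 by (intro Bochner_Integration.integrable_mult_right Bochner_Integration.integrable_add)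
    have iF: "integrable (measure_pmf (pst eps)) (F eps)" using Fint that by auto
    have iD: "integrable (measure_pmf (pst eps)) (\<lambda>q. F eps q - G eps q)"
    proof (rule Bochner_Integration.integrable_bound[OF iB])
      show "AE x in measure_pmf (pst eps). norm (F eps x - G eps x) \<le> norm (B eps x)"
      proof (rule AE_I2)
        fix x
        have "cmod (F eps x - G eps x) \<le> B eps x" by (rule Db) (use that in linarith)
        also have "\<dots> \<le> norm (B eps x)" unfolding real_norm_def by (rule abs_ge_self)
        finally show "norm (F eps x - G eps x) \<le> norm (B eps x)" .
      qed
    qed auto
    have iG: "integrable (measure_pmf (pst eps)) (G eps)"
    proof -
      have "integrable (measure_pmf (pst eps)) (\<lambda>q. F eps q - (F eps q - G eps q))"
        using iF iD by (rule Bochner_Integration.integrable_diff)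
      thus ?thesis by simp
    qed
    have "measure_pmf.expectation (pst eps) (F eps) - measure_pmf.expectation (pst eps) (G eps)
        = measure_pmf.expectation (pst eps) (\<lambda>q. F eps q - G eps q)"
      using iF iG by (rule Bochner_Integration.integral_diff[symmetric])
    hence "cmod (measure_pmf.expectation (pst eps) (F eps) - measure_pmf.expectation (pst eps) (G eps))
        \<le> measure_pmf.expectation (pst eps) (\<lambda>q. cmod (F eps q - G eps q))"
      by (simp add: integral_norm_bound)
    also have "\<dots> \<le> measure_pmf.expectation (pst eps) (B eps)"
      by (rule integral_mono) (use iD iB Db that in auto)
    also have "\<dots> = eps * cmod phi1 * (measure_pmf.expectation (pst eps) (\<lambda>q. qperp_norm q ^ 2)
        + measure_pmf.expectation (pst eps) (\<lambda>q. exp (eps * th2 * qperp_norm q)))"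
      unfolding B_def using i2 i3 Bochner_Integration.integrable_add[OF i3 i2] by simp
    also have "\<dots> \<le> eps * cmod phi1 * (C3 + C2)"
      using c2 c3 that by (intro mult_left_mono) auto
    finally show ?thesis .
  qed
  have P4: "((\<lambda>eps. measure_pmf.expectation (pst eps) (F eps) - measure_pmf.expectation (pst eps) (G eps))
       \<longlongrightarrow> 0) (at_right 0)"
  proof (rule Lim_null_comparison)
    show "\<forall>\<^sub>F eps in at_right 0. norm (measure_pmf.expectation (pst eps) (F eps) - measure_pmf.expectation (pst eps) (G eps))
        \<le> eps * cmod phi1 * (C3 + C2)"
      unfolding eventually_at_right_field
      by (rule exI[of _ "min e1 (min e2 eps0)"]) (use e1 e2 eps0 DE in auto)
    have "((\<lambda>eps::real. eps * cmod phi1 * (C3 + C2)) \<longlongrightarrow> 0 * cmod phi1 * (C3 + C2)) (at_right 0)"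
      by (intro tendsto_intros)
    thus "((\<lambda>eps::real. eps * cmod phi1 * (C3 + C2)) \<longlongrightarrow> 0) (at_right 0)" by simp
  qed
  show ?thesis using P1 P2 P3 P4 unfolding F_def G_def by blast
qed

end
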